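(* Let $\mathcal D_0(x)=\mathcal D(x)$ and, recursively, $\mathcal D_{k+1}(x)=\frac{d}{dx}\mathcal D_k(x)+[\mathcal D_k(x),\mathcal D(x)]$ for $k\ge 0$. Then there exist polynomials $\alpha_0(x),\dots,\alpha_{\dim\mathfrak g}(x)\in\mathbb C[x]$, not all zero, such that $\sum_{k=0}^{\dim\mathfrak g}\alpha_k(x)\mathcal D_k(x)=0$; and for any such polynomials, for every $E\in\mathfrak g$, the function $x\mapsto W_1(x.E)$ satisfies the linear ODE $$\sum_{k=0}^{\dim\mathfrak g}\alpha_k(x)\frac{d^k}{dx^k}W_1(x.E)=0 .$$
   Context: Let $G\subset GL(r,\mathbb C)$ be a complex reductive Lie group given in a faithful matrix representation, with Lie algebra $\mathfrak g\subset\mathfrak{gl}(r,\mathbb C)$; ${\rm Tr}$ denotes the matrix trace. Let $\mathcal D(x)$ be an $r\times r$ matrix whose entries are rational functions of $x$, with $\mathcal D(x)\in\mathfrak g$ for each $x$ away from its poles. Let $\Psi(x)$ be a holomorphic $G$-valued solution of $\frac{d}{dx}\Psi(x)=\mathcal D(x)\Psi(x)$ on a simply connected domain $U\subset\mathbb C$ avoiding the poles of $\mathcal D$. For $x\in U$ and $E\in\mathfrak g$ write $x.E$ for the pair $(x,E)$ and set $M(x.E)=\Psi(x)E\Psi(x)^{-1}$. Define $W_1(x.E)={\rm Tr}\,\mathcal D(x)M(x.E)$. *)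

theory Defs
  imports "HOL-Analysis.Analysis" "HOL-Computational_Algebra.Polynomial"
begin

definition cscale :: "complex \<Rightarrow> complex^'r^'r \<Rightarrow> complex^'r^'r" where
  "cscale c A = (\<chi> i j. c * A $ i $ j)"

interpretation mat_cvs: vector_space "cscale :: complex \<Rightarrow> complex^'r^'r \<Rightarrow> complex^'r^'r"
  by unfold_locales (simp_all add: cscale_def vec_eq_iff algebra_simps)

definition cdim :: "(complex^'r^'r) set \<Rightarrow> nat" where
  "cdim V = vector_space.dim cscale V"

definition commutator :: "complex^'r^'r \<Rightarrow> complex^'r^'r \<Rightarrow> complex^'r^'r" where
  "commutator A B = A ** B - B ** A"

definition lie_subalgebra :: "(complex^'r^'r) set \<Rightarrow> bool" where
  "lie_subalgebra g \<longleftrightarrow> 0 \<in> g \<and> (\<forall>A\<in>g. \<forall>B\<in>g. A + B \<in> g)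
     \<and> (\<forall>c. \<forall>A\<in>g. cscale c A \<in> g) \<and> (\<forall>A\<in>g. \<forall>B\<in>g. commutator A B \<in> g)"

definition mderiv :: "(complex \<Rightarrow> complex^'r^'r) \<Rightarrow> complex \<Rightarrow> complex^'r^'r" where
  "mderiv F x = (\<chi> i j. deriv (\<lambda>y. F y $ i $ j) x)"

primrec Dseq :: "(complex \<Rightarrow> complex^'r^'r) \<Rightarrow> nat \<Rightarrow> complex \<Rightarrow> complex^'r^'r" where
  "Dseq D 0 = D"
| "Dseq D (Suc k) = (\<lambda>x. mderiv (Dseq D k) x + commutator (Dseq D k x) (D x))"

definition Mfun :: "(complex \<Rightarrow> complex^'r^'r) \<Rightarrow> complex \<Rightarrow> complex^'r^'r \<Rightarrow> complex^'r^'r" where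
  "Mfun Psi x E = Psi x ** E ** matrix_inv (Psi x)"

definition W1 :: "(complex \<Rightarrow> complex^'r^'r) \<Rightarrow> (complex \<Rightarrow> complex^'r^'r)
    \<Rightarrow> complex \<Rightarrow> complex^'r^'r \<Rightarrow> complex" where
  "W1 D Psi x E = trace (D x ** Mfun Psi x E)"

definition rational_matrix_with_denom ::
    "(complex \<Rightarrow> complex^'r^'r) \<Rightarrow> complex poly \<Rightarrow> bool" where
  "rational_matrix_with_denom D q \<longleftrightarrow> q \<noteq> 0 \<and>
     (\<exists>p :: 'r \<Rightarrow> 'r \<Rightarrow> complex poly. \<forall>x. poly q x \<noteq> 0 \<longrightarrow>
        (\<forall>i j. D x $ i $ j = poly (p i j) x / poly q x))"

end

theory Submission
  imports Defs "HOL-Library.Function_Algebras" "HOL-Complex_Analysis.Cauchy_Integral_Formula"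
begin


definition mhd :: "(complex \<Rightarrow> complex^'r^'r) \<Rightarrow> complex^'r^'r \<Rightarrow> complex \<Rightarrow> bool" where
 "mhd F F' x \<longleftrightarrow> (\<forall>i j. ((\<lambda>y. F y $i$j) has_field_derivative F' $i$j) (at x))"

lemma mhd_mult:
  assumes "mhd F F' x" "mhd G G' x"
  shows "mhd (\<lambda>y. F y ** G y) (F' ** G x + F x ** G') x"
  unfolding mhd_def
proof (intro allI)
  fix i j
  have "((\<lambda>y. \<Sum>l\<in>UNIV. F y $i$l * G y $l$j) has_field_derivative
     (\<Sum>l\<in>UNIV. F' $i$l * G x $l$j + F x $i$l * G' $l$j)) (at x)"
    using assms unfolding mhd_def
    by (intro DERIV_sum) (auto intro!: derivative_eq_intros)
  then show "((\<lambda>y. (F y ** G y) $i$j) has_field_derivative (F' ** G x + F x ** G') $i$j) (at x)"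
    by (simp add: matrix_matrix_mult_def sum.distrib)
qed

lemma mhd_const: "mhd (\<lambda>y. E) 0 x"
  unfolding mhd_def by auto

lemma mhd_add: "mhd F F' x \<Longrightarrow> mhd G G' x \<Longrightarrow> mhd (\<lambda>y. F y + G y) (F' + G') x"
  unfolding mhd_def by (auto intro!: derivative_eq_intros)

lemma mhd_diff: "mhd F F' x \<Longrightarrow> mhd G G' x \<Longrightarrow> mhd (\<lambda>y. F y - G y) (F' - G') x"
  unfolding mhd_def by (auto intro!: derivative_eq_intros)

lemma mhd_trace: "mhd F F' x \<Longrightarrow> ((\<lambda>y. trace (F y)) has_field_derivative trace F') (at x)"
  unfolding mhd_def trace_def by (intro DERIV_sum) auto

lemma mhd_unique: "mhd F F' x \<Longrightarrow> mhd F F'' x \<Longrightarrow> F' = F''"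
  unfolding mhd_def vec_eq_iff by (metis DERIV_unique)

lemma mhd_transform:
  assumes "mhd F F' x" "open S" "x \<in> S" "\<And>y. y \<in> S \<Longrightarrow> F y = G y"
  shows "mhd G F' x"
  unfolding mhd_def
proof (intro allI)
  fix i j
  show "((\<lambda>y. G y $ i $ j) has_field_derivative F' $ i $ j) (at x)"
    using has_field_derivative_transform_within_open[of "\<lambda>y. F y$i$j" "F'$i$j" x S "\<lambda>y. G y$i$j"]
      assms unfolding mhd_def by auto
qed

lemma matrix_inv_props:
  assumes "invertible (A::'a::semiring_1^'n^'n)"
  shows "A ** matrix_inv A = mat 1" "matrix_inv A ** A = mat 1"
  using someI_ex[OF assms[unfolded invertible_def]] unfolding matrix_inv_def by auto

lemma det_holo:
  assumes "\<And>a b. (\<lambda>y. F y $a$b) holomorphic_on S"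
  shows "(\<lambda>y. det (F y)) holomorphic_on S"
  unfolding det_def
  by (intro holomorphic_on_sum holomorphic_on_mult holomorphic_on_prod holomorphic_on_const assms)

lemma inv_cramer:
  fixes A :: "complex^'n^'n"
  assumes "invertible A"
  shows "matrix_inv A $ i $ k =
    det (\<chi> a b. if b = i then (if a = k then 1 else 0) else A$a$b) / det A"
proof -
  have d: "det A \<noteq> 0" using assms invertible_det_nz by blast
  have "A *v (matrix_inv A *v axis k 1) = axis k 1"
    by (simp add: matrix_vector_mul_assoc matrix_inv_props[OF assms])
  then have "matrix_inv A *v axis k 1 =
     (\<chi> k'. det(\<chi> a b. if b=k' then axis k 1 $a else A$a$b) / det A)"
    using cramer[OF d] by blast
  then have "(matrix_inv A *v axis k 1) $ i = det(\<chi> a b. if b=i then axis k 1 $a else A$a$b) / det A"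
    by simp
  moreover have "(matrix_inv A *v axis k 1) $ i = matrix_inv A $ i $ k"
    by (simp add: matrix_vector_mult_def axis_def if_distrib cong: if_cong)
  moreover have "(\<chi> a b. if b = i then axis k 1 $ a else A$a$b) = (\<chi> a b. if b = i then (if a = k then 1 else 0) else A$a$b)"
    by (simp add: vec_eq_iff axis_def)
  ultimately show ?thesis by simp
qed


lemma mm_add_r: "((A::complex^'n^'n) + B) ** C = A ** C + B ** C"
  by (simp add: matrix_matrix_mult_def vec_eq_iff sum.distrib algebra_simps)
lemma mm_add_l: "(C::complex^'n^'n) ** (A + B) = C ** A + C ** B"
  by (simp add: matrix_matrix_mult_def vec_eq_iff sum.distrib algebra_simps)
lemma mm_diff_r: "((A::complex^'n^'n) - B) ** C = A ** C - B ** C"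
  by (simp add: matrix_matrix_mult_def vec_eq_iff sum_subtractf algebra_simps)
lemma mm_diff_l: "(C::complex^'n^'n) ** (A - B) = C ** A - C ** B"
  by (simp add: matrix_matrix_mult_def vec_eq_iff sum_subtractf algebra_simps)
lemma mm_neg_l: "(C::complex^'n^'n) ** (- A) = - (C ** A)"
  by (simp add: matrix_matrix_mult_def vec_eq_iff sum_negf)
lemma mm_neg_r: "(- (C::complex^'n^'n)) ** A = - (C ** A)"
  by (simp add: matrix_matrix_mult_def vec_eq_iff sum_negf)

lemma M_deriv:
  fixes D Psi :: "complex \<Rightarrow> complex^'r^'r"
  assumes U: "open U" and xU: "x \<in> U"
    and Psi_inv: "\<And>x. x \<in> U \<Longrightarrow> invertible (Psi x)"
    and Psi_ode: "\<And>x i j. x \<in> U \<Longrightarrow>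
        ((\<lambda>y. Psi y $ i $ j) has_field_derivative (D x ** Psi x) $ i $ j) (at x)"
  shows "mhd (\<lambda>y. Mfun Psi y E) (D x ** Mfun Psi x E - Mfun Psi x E ** D x) x"
proof -
  define N where "N y = matrix_inv (Psi y)" for y
  have hP: "mhd Psi (D x ** Psi x) x" using Psi_ode[OF xU] unfolding mhd_def by auto
  have Pholo: "(\<lambda>y. Psi y $ a $ b) holomorphic_on U" for a b
    using Psi_ode U by (subst holomorphic_on_open) auto
  have Nholo: "(\<lambda>y. N y $ i $ k) holomorphic_on U" for i k
  proof (rule holomorphic_transform)
    show "(\<lambda>y. det (\<chi> a b. if b = i then (if a = k then 1 else 0) else Psi y$a$b) / det (Psi y)) holomorphic_on U"
    proof (intro holomorphic_on_divide det_holo)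
      have Pif: "(\<lambda>z. if b = i then c else Psi z $ a $ b) holomorphic_on U" for a b c
        by (cases "b = i") (simp_all add: Pholo)
      show "(\<lambda>y. (\<chi> a b. if b = i then (if a = k then 1 else 0) else Psi y$a$b) $ a $ b) holomorphic_on U" for a b
        by (cases "a = k") (simp_all add: Pif)
      show "(\<lambda>y. Psi y $ a $ b) holomorphic_on U" for a b by (rule Pholo)
      show "\<And>y. y \<in> U \<Longrightarrow> det (Psi y) \<noteq> 0" using Psi_inv invertible_det_nz by metis
    qed
    show "\<And>y. y \<in> U \<Longrightarrow> det (\<chi> a b. if b = i then (if a = k then 1 else 0) else Psi y$a$b) / det (Psi y) = N y $ i $ k"
      unfolding N_def by (simp add: inv_cramer Psi_inv)
  qed
  define N' where "N' = (\<chi> i k. deriv (\<lambda>y. N y $ i $ k) x)"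
  have hN: "mhd N N' x"
    unfolding mhd_def N'_def using holomorphic_derivI[OF Nholo U xU] by simp
  have h1: "mhd (\<lambda>y. Psi y ** N y) (D x ** Psi x ** N x + Psi x ** N') x"
    using mhd_mult[OF hP hN] .
  have h2: "mhd (\<lambda>y. Psi y ** N y) 0 x"
    by (rule mhd_transform[OF mhd_const U xU]) (simp add: N_def matrix_inv_props Psi_inv)
  have PN: "Psi x ** N x = mat 1" "N x ** Psi x = mat 1"
    by (simp_all add: N_def matrix_inv_props Psi_inv xU)
  have "D x ** Psi x ** N x + Psi x ** N' = 0" using mhd_unique[OF h1 h2] .
  then have "Psi x ** N' = - D x"
    using PN by (simp add: matrix_mul_assoc[symmetric] eq_neg_iff_add_eq_0 add.commute)
  then have N'eq: "N' = - (N x ** D x)"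
    by (metis PN(2) matrix_mul_assoc matrix_mul_lid mm_neg_l)
  have hPE: "mhd (\<lambda>y. Psi y ** E) (D x ** Psi x ** E + Psi x ** 0) x"
    using mhd_mult[OF hP mhd_const] .
  have "mhd (\<lambda>y. Psi y ** E ** N y) ((D x ** Psi x ** E + Psi x ** 0) ** N x + Psi x ** E ** N') x"
    using mhd_mult[OF hPE hN] .
  moreover have "(D x ** Psi x ** E + Psi x ** 0) ** N x + Psi x ** E ** N' = D x ** Mfun Psi x E - Mfun Psi x E ** D x"
    unfolding N'eq Mfun_def N_def
    by (simp add: mm_neg_l matrix_mul_assoc)
  ultimately show ?thesis unfolding Mfun_def N_def by simp
qed

lemma open_nonroot: "q \<noteq> 0 \<Longrightarrow> open {x::complex. poly q x \<noteq> 0}"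
proof -
  assume "q \<noteq> 0"
  then have "finite {x. poly q x = 0}" by (rule poly_roots_finite)
  then have "closed {x. poly q x = 0}" by (rule finite_imp_closed)
  then show ?thesis by (simp add: open_Collect_neg closed_def Compl_eq)
qed

lemma D_holo:
  assumes rat: "rational_matrix_with_denom D q"
  shows "(\<lambda>y. D y $ i $ j) holomorphic_on {x. poly q x \<noteq> 0}"
proof -
  from rat obtain p where q0: "q \<noteq> 0" and p: "\<And>x i j. poly q x \<noteq> 0 \<Longrightarrow> D x $ i $ j = poly (p i j) x / poly q x"
    unfolding rational_matrix_with_denom_def by blast
  have "(\<lambda>y. poly (p i j) y / poly q y) holomorphic_on {x. poly q x \<noteq> 0}"
    by (intro holomorphic_intros) auto
  then show ?thesis by (rule holomorphic_transform) (simp add: p)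
qed

lemma Dseq_holo:
  assumes rat: "rational_matrix_with_denom D q"
  shows "(\<lambda>y. Dseq D k y $ i $ j) holomorphic_on {x. poly q x \<noteq> 0}"
proof (induction k arbitrary: i j)
  case 0
  then show ?case using D_holo[OF rat] by simp
next
  case (Suc k)
  have q0: "q \<noteq> 0" using rat unfolding rational_matrix_with_denom_def by blast
  have o: "open {x. poly q x \<noteq> 0}" using open_nonroot[OF q0] .
  show ?case
    unfolding Dseq.simps mderiv_def commutator_def matrix_matrix_mult_def
    by (simp, intro holomorphic_intros holomorphic_deriv Suc o D_holo[OF rat])
qed

lemma Dseq_mhd:
  assumes rat: "rational_matrix_with_denom D q" and x: "poly q x \<noteq> 0"
  shows "mhd (Dseq D k) (mderiv (Dseq D k) x) x"
proof -
  have q0: "q \<noteq> 0" using rat unfolding rational_matrix_with_denom_def by blast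
  show ?thesis
    unfolding mhd_def mderiv_def
    using holomorphic_derivI[OF Dseq_holo[OF rat] open_nonroot[OF q0]] x by simp
qed

lemma T_deriv:
  fixes D Psi :: "complex \<Rightarrow> complex^'r^'r"
  assumes rat: "rational_matrix_with_denom D q"
    and U: "open U" and xU: "x \<in> U"
    and U_nopole: "\<And>x. x \<in> U \<Longrightarrow> poly q x \<noteq> 0"
    and Psi_inv: "\<And>x. x \<in> U \<Longrightarrow> invertible (Psi x)"
    and Psi_ode: "\<And>x i j. x \<in> U \<Longrightarrow>
        ((\<lambda>y. Psi y $ i $ j) has_field_derivative (D x ** Psi x) $ i $ j) (at x)"
  shows "((\<lambda>y. trace (Dseq D k y ** Mfun Psi y E)) has_field_derivative
           trace (Dseq D (Suc k) x ** Mfun Psi x E)) (at x)"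
proof -
  have h: "mhd (\<lambda>y. Dseq D k y ** Mfun Psi y E)
     (mderiv (Dseq D k) x ** Mfun Psi x E + Dseq D k x ** (D x ** Mfun Psi x E - Mfun Psi x E ** D x)) x"
    by (rule mhd_mult[OF Dseq_mhd[OF rat U_nopole[OF xU]] M_deriv[OF U xU Psi_inv Psi_ode]])
  have e: "trace (mderiv (Dseq D k) x ** Mfun Psi x E + Dseq D k x ** (D x ** Mfun Psi x E - Mfun Psi x E ** D x))
     = trace (Dseq D (Suc k) x ** Mfun Psi x E)"
  proof -
    have "trace (Dseq D k x ** Mfun Psi x E ** D x) = trace (D x ** Dseq D k x ** Mfun Psi x E)"
      by (metis trace_mul_sym matrix_mul_assoc)
    then show ?thesis
      by (simp add: commutator_def mm_add_r mm_diff_r mm_add_l mm_diff_l trace_add trace_sub matrix_mul_assoc)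
  qed
  show ?thesis using mhd_trace[OF h] unfolding e .
qed

lemma W_iter:
  fixes D Psi :: "complex \<Rightarrow> complex^'r^'r"
  assumes rat: "rational_matrix_with_denom D q"
    and U: "open U"
    and U_nopole: "\<And>x. x \<in> U \<Longrightarrow> poly q x \<noteq> 0"
    and Psi_inv: "\<And>x. x \<in> U \<Longrightarrow> invertible (Psi x)"
    and Psi_ode: "\<And>x i j. x \<in> U \<Longrightarrow>
        ((\<lambda>y. Psi y $ i $ j) has_field_derivative (D x ** Psi x) $ i $ j) (at x)"
  shows "x \<in> U \<Longrightarrow> (deriv ^^ k) (\<lambda>y. W1 D Psi y E) x = trace (Dseq D k x ** Mfun Psi x E)"
proof (induction k arbitrary: x)
  case 0
  then show ?case by (simp add: W1_def)
next
  case (Suc k)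
  have "eventually (\<lambda>y. y \<in> U) (nhds x)" using eventually_nhds_in_open[OF U Suc.prems] .
  then have ev: "eventually (\<lambda>y. (deriv ^^ k) (\<lambda>y. W1 D Psi y E) y = trace (Dseq D k y ** Mfun Psi y E)) (nhds x)"
    by (rule eventually_mono) (rule Suc.IH)
  have "(deriv ^^ Suc k) (\<lambda>y. W1 D Psi y E) x = deriv ((deriv ^^ k) (\<lambda>y. W1 D Psi y E)) x"
    by simp
  also have "\<dots> = deriv (\<lambda>y. trace (Dseq D k y ** Mfun Psi y E)) x"
    by (rule deriv_cong_ev[OF ev refl])
  also have "\<dots> = trace (Dseq D (Suc k) x ** Mfun Psi x E)"
    by (rule DERIV_imp_deriv, rule T_deriv[OF rat U Suc.prems U_nopole Psi_inv Psi_ode])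
  finally show ?case .
qed

lemma trace_sum_mult:
  "finite K \<Longrightarrow> trace ((\<Sum>k\<in>K. cscale (c k) (A k)) ** (B::complex^'n^'n)) = (\<Sum>k\<in>K. c k * trace (A k ** B))"
proof (induction K rule: finite_induct)
  case empty then show ?case by (simp add: trace_def matrix_matrix_mult_def)
next
  case (insert a K)
  have "trace (cscale (c a) (A a) ** B) = c a * trace (A a ** B)"
    by (simp add: trace_def matrix_matrix_mult_def cscale_def sum_distrib_left mult.assoc)
  then show ?case using insert by (simp add: mm_add_r trace_add)
qed





lemma scaleR_complex: "c *\<^sub>R (z::complex) = complex_of_real c * z"
  by (simp add: scaleR_conv_of_real)

lemma cscale_of_real: "c *\<^sub>R (A::complex^'n^'n) = cscale (complex_of_real c) A"
  by (simp add: cscale_def vec_eq_iff scaleR_complex)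

lemma lie_subspace: "lie_subalgebra g \<Longrightarrow> subspace g"
  unfolding subspace_def lie_subalgebra_def by (auto simp: cscale_of_real)

lemma lie_closed: "lie_subalgebra g \<Longrightarrow> closed g"
  by (intro closed_subspace lie_subspace)

lemma lie_0: "lie_subalgebra g \<Longrightarrow> 0 \<in> g" unfolding lie_subalgebra_def by blast
lemma lie_add: "lie_subalgebra g \<Longrightarrow> A \<in> g \<Longrightarrow> B \<in> g \<Longrightarrow> A + B \<in> g"
  unfolding lie_subalgebra_def by blast
lemma lie_scale: "lie_subalgebra g \<Longrightarrow> A \<in> g \<Longrightarrow> cscale c A \<in> g"
  unfolding lie_subalgebra_def by blast
lemma lie_comm: "lie_subalgebra g \<Longrightarrow> A \<in> g \<Longrightarrow> B \<in> g \<Longrightarrow> commutator A B \<in> g"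
  unfolding lie_subalgebra_def by blast
lemma lie_neg: "lie_subalgebra g \<Longrightarrow> A \<in> g \<Longrightarrow> - A \<in> g"
proof -
  assume "lie_subalgebra g" "A \<in> g"
  then have "cscale (-1) A \<in> g" by (rule lie_scale)
  moreover have "cscale (-1) A = - A" by (simp add: cscale_def vec_eq_iff)
  ultimately show ?thesis by simp
qed
lemma lie_diff: "lie_subalgebra g \<Longrightarrow> A \<in> g \<Longrightarrow> B \<in> g \<Longrightarrow> A - B \<in> g"
  using lie_add[of g A "-B"] lie_neg by force
lemma lie_sum: "lie_subalgebra g \<Longrightarrow> (\<And>k. k \<in> K \<Longrightarrow> A k \<in> g) \<Longrightarrow> sum A K \<in> g"
  by (induction K rule: infinite_finite_induct) (auto simp: lie_0 lie_add)

lemma closure_finite_exc: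
  fixes H :: "complex \<Rightarrow> 'a::topological_space"
  assumes T: "closed T" and H: "continuous_on UNIV H" and Z: "finite Z"
    and out: "\<And>x. x \<notin> Z \<Longrightarrow> H x \<in> T"
  shows "H x \<in> T"
proof -
  have c: "closed (H -` T)" using continuous_on_closed_vimage[of UNIV H] H T by auto
  have "x islimpt (UNIV - Z)"
    using islimpt_Un_finite[OF Z, of x "UNIV - Z"] islimpt_UNIV[of x] by (simp add: Un_absorb)
  then have "x islimpt (H -` T)" by (rule islimpt_subset) (use out in auto)
  then show ?thesis using c closed_limpt by blast
qed

lemma cscale_cont: "continuous_on UNIV (\<lambda>x::complex. cscale (f x) (A::complex^'n^'n))" if "continuous_on UNIV f"
  unfolding cscale_def by (intro continuous_on_vec_lambda continuous_intros that)

lemma interp: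
  assumes g: "lie_subalgebra g"
  shows "(\<And>x. (\<Sum>e\<le>d. cscale (x^e) (C e)) \<in> g) \<Longrightarrow> e \<le> d \<Longrightarrow> C e \<in> g"
proof (induction d arbitrary: C e)
  case 0
  then show ?case using "0.prems"(1)[of 0] by (simp add: cscale_def vec_eq_iff)
next
  case (Suc d)
  have C0: "C 0 \<in> g"
  proof -
    have "(\<Sum>e\<le>Suc d. cscale (0^e) (C e)) = C 0"
      by (subst sum.atMost_Suc_shift) (simp add: cscale_def vec_eq_iff)
    then show ?thesis using Suc.prems(1)[of 0] by simp
  qed
  have shift: "(\<Sum>e\<le>Suc d. cscale (x^e) (C e)) = C 0 + cscale x (\<Sum>e\<le>d. cscale (x^e) (C (Suc e)))" for x
    by (subst sum.atMost_Suc_shift) (simp add: cscale_def vec_eq_iff sum_distrib_left mult.assoc)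
  have H: "(\<Sum>e\<le>d. cscale (x^e) (C (Suc e))) \<in> g" for x
  proof (rule closure_finite_exc[where Z="{0}" and T=g and H="\<lambda>x. \<Sum>e\<le>d. cscale (x^e) (C (Suc e))"])
    show "closed g" using lie_closed[OF g] .
    show "continuous_on UNIV (\<lambda>x. \<Sum>e\<le>d. cscale (x ^ e) (C (Suc e)))"
      by (intro continuous_on_sum cscale_cont continuous_intros)
    fix y :: complex assume "y \<notin> {0}"
    then have y: "y \<noteq> 0" by simp
    have "cscale (1/y) ((\<Sum>e\<le>Suc d. cscale (y^e) (C e)) - C 0) \<in> g"
      using Suc.prems(1)[of y] C0 g by (intro lie_scale lie_diff) auto
    moreover have "cscale (1/y) ((\<Sum>e\<le>Suc d. cscale (y^e) (C e)) - C 0) = (\<Sum>e\<le>d. cscale (y^e) (C (Suc e)))"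
      unfolding shift using y by (simp add: cscale_def vec_eq_iff)
    ultimately show "(\<Sum>e\<le>d. cscale (y^e) (C (Suc e))) \<in> g" by simp
  qed auto
  show ?case
  proof (cases e)
    case 0 then show ?thesis using C0 by simp
  next
    case (Suc e')
    then show ?thesis using Suc.IH[of "\<lambda>e. C (Suc e)" e'] H Suc.prems(2) \<open>e = Suc e'\<close> by auto
  qed
qed


definition gp :: "(complex^'r^'r) set \<Rightarrow> (complex \<Rightarrow> complex^'r^'r) \<Rightarrow> bool" where
  "gp g F \<longleftrightarrow> (\<exists>d C. (\<forall>e. C e \<in> g) \<and> (\<forall>x. F x = (\<Sum>e\<le>d. cscale (x^e) (C e))))"

lemma poly_sum_ext: "degree (p::complex poly) \<le> d \<Longrightarrow> poly p x = (\<Sum>e\<le>d. coeff p e * x^e)"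
  unfolding poly_altdef
  by (rule sum.mono_neutral_left) (auto simp: coeff_eq_0)

lemma gpI:
  assumes g: "lie_subalgebra g"
    and P: "\<And>x i j. F x $ i $ j = poly (P i j) x"
    and Fg: "\<And>x. F x \<in> g"
  shows "gp g F"
proof -
  define d where "d = Max ((\<lambda>(i,j). degree (P i j)) ` UNIV)"
  define C where "C e = (\<chi> i j. coeff (P i j) e)" for e
  have dd: "degree (P i j) \<le> d" for i j
    unfolding d_def by (rule Max_ge) (simp, metis (mono_tags) case_prod_conv rangeI)
  have Feq: "F x = (\<Sum>e\<le>d. cscale (x^e) (C e))" for x
    by (simp add: vec_eq_iff P C_def cscale_def sum_component poly_sum_ext[OF dd] mult.commute)
  have "C e \<in> g" for e
  proof (cases "e \<le> d")
    case True
    then show ?thesis using interp[OF g, where d=d and C=C and e=e] Feq Fg by metis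
  next
    case False
    have "coeff (P i j) e = 0" for i j
      using dd[of i j] False by (intro coeff_eq_0) simp
    then have "C e = 0" by (simp add: C_def vec_eq_iff)
    then show ?thesis using lie_0[OF g] by simp
  qed
  then show ?thesis unfolding gp_def using Feq by blast
qed

lemma cscale_add: "cscale a (A + B) = cscale a A + cscale a B"
  by (simp add: cscale_def vec_eq_iff algebra_simps)
lemma cscale_diff: "cscale a (A - B) = cscale a A - cscale a B"
  by (simp add: cscale_def vec_eq_iff algebra_simps)
lemma cscale_cscale: "cscale a (cscale b A) = cscale (a * b) A"
  by (simp add: cscale_def vec_eq_iff algebra_simps)
lemma comm_cscale: "commutator (cscale a (A::complex^'n^'n)) (cscale b B) = cscale (a * b) (commutator A B)"
  by (simp add: cscale_def commutator_def matrix_matrix_mult_def vec_eq_iff algebra_simps sum_distrib_left sum_subtractf)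

lemma gp_deriv_in:
  assumes "gp g F" and P: "\<And>x i j. F x $ i $ j = poly (P i j) x" and g: "lie_subalgebra g"
  shows "(\<chi> i j. poly (pderiv (P i j)) x) \<in> g"
proof -
  obtain d C where C: "\<And>e. C e \<in> g" and F: "\<And>x. F x = (\<Sum>e\<le>d. cscale (x^e) (C e))"
    using assms(1) unfolding gp_def by blast
  have "(\<chi> i j. poly (pderiv (P i j)) x) = (\<Sum>e\<le>d. cscale (of_nat e * x^(e - Suc 0)) (C e))"
  proof -
    have "poly (pderiv (P i j)) x = (\<Sum>e\<le>d. of_nat e * x^(e - Suc 0) * C e $ i $ j)" for i j
    proof -
      have fe: "(\<lambda>y. poly (P i j) y) = (\<lambda>y. \<Sum>e\<le>d. y^e * C e $ i $ j)"
        using P F by (auto simp: fun_eq_iff sum_component cscale_def)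
      have d1: "((\<lambda>y. \<Sum>e\<le>d. y^e * C e $ i $ j) has_field_derivative (\<Sum>e\<le>d. of_nat e * x^(e - Suc 0) * C e $ i $ j)) (at x)"
        by (intro DERIV_sum DERIV_cmult_right) (use DERIV_power[OF DERIV_ident] in simp)
      have d2: "((\<lambda>y. \<Sum>e\<le>d. y^e * C e $ i $ j) has_field_derivative poly (pderiv (P i j)) x) (at x)"
        using poly_DERIV[of "P i j" x] unfolding fe .
      show ?thesis by (rule DERIV_unique[OF d2 d1])
    qed
    then show ?thesis by (simp add: vec_eq_iff sum_component cscale_def)
  qed
  also have "\<dots> \<in> g" using C g by (intro lie_sum lie_scale) auto
  finally show ?thesis .
qed

lemma Dseq_rep:
  assumes g: "lie_subalgebra g"
    and rat: "rational_matrix_with_denom D q"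
    and Dg: "\<And>x. poly q x \<noteq> 0 \<Longrightarrow> D x \<in> g"
  shows "\<exists>F P. (\<forall>x i j. F x $ i $ j = poly (P i j) x) \<and> (\<forall>x. F x \<in> g) \<and>
     (\<forall>x. poly q x \<noteq> 0 \<longrightarrow> Dseq D k x = cscale (inverse (poly q x ^ Suc k)) (F x))"
proof -
  from rat obtain p where q0: "q \<noteq> 0" and p: "\<And>x i j. poly q x \<noteq> 0 \<Longrightarrow> D x $ i $ j = poly (p i j) x / poly q x"
    unfolding rational_matrix_with_denom_def by blast
  define F0 where "F0 x = (\<chi> i j. poly (p i j) x)" for x
  have D0: "D x = cscale (inverse (poly q x)) (F0 x)" if "poly q x \<noteq> 0" for x
    using p[OF that] by (simp add: cscale_def F0_def vec_eq_iff divide_inverse mult.commute)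
  have F0g: "F0 x \<in> g" for x
  proof (rule closure_finite_exc[where Z="{x. poly q x = 0}" and T=g])
    show "closed g" by (rule lie_closed[OF g])
    show "continuous_on UNIV F0" unfolding F0_def by (intro continuous_on_vec_lambda continuous_intros)
    show "finite {x. poly q x = 0}" by (rule poly_roots_finite[OF q0])
    fix y assume "y \<notin> {x. poly q x = 0}"
    then have y: "poly q y \<noteq> 0" by simp
    have "F0 y = cscale (poly q y) (D y)" using D0[OF y] y by (simp add: cscale_cscale)
    then show "F0 y \<in> g" using Dg[OF y] g by (simp add: lie_scale)
  qed
  have oS: "open {x. poly q x \<noteq> 0}" by (rule open_nonroot[OF q0])
  show ?thesis
  proof (induction k)
    case 0
    have "\<forall>x i j. F0 x $ i $ j = poly (p i j) x" by (simp add: F0_def)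
    then show ?case using F0g D0 by auto
  next
    case (Suc k)
    then obtain F P where P: "\<And>x i j. F x $ i $ j = poly (P i j) x" and Fg: "\<And>x. F x \<in> g"
      and DF: "\<And>x. poly q x \<noteq> 0 \<Longrightarrow> Dseq D k x = cscale (inverse (poly q x ^ Suc k)) (F x)"
      by blast
    have gpF: "gp g F" by (rule gpI[OF g P Fg])
    define F' where "F' x = (\<chi> i j. poly (pderiv (P i j)) x)" for x
    have F'g: "F' x \<in> g" for x unfolding F'_def by (rule gp_deriv_in[OF gpF P g])
    define F1 where "F1 x = cscale (poly q x) (F' x) - cscale (of_nat (Suc k) * poly (pderiv q) x) (F x)
        + commutator (F x) (F0 x)" for x
    define P1 where "P1 i j = q * pderiv (P i j) - smult (of_nat (Suc k)) (pderiv q) * P i j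
        + (\<Sum>l\<in>UNIV. P i l * p l j - p i l * P l j)" for i j
    have P1: "F1 x $ i $ j = poly (P1 i j) x" for x i j
      by (simp add: F1_def P1_def F'_def F0_def cscale_def commutator_def matrix_matrix_mult_def
          P poly_sum sum_subtractf)
    have F1g: "F1 x \<in> g" for x
      unfolding F1_def using g F'g Fg F0g by (intro lie_add lie_diff lie_scale lie_comm) auto
    have "Dseq D (Suc k) x = cscale (inverse (poly q x ^ Suc (Suc k))) (F1 x)" if x: "poly q x \<noteq> 0" for x
    proof -
      define Q where "Q = q ^ Suc k"
      have Qx: "poly Q x \<noteq> 0" using x by (simp add: Q_def)
      have md: "mderiv (Dseq D k) x = cscale (inverse (poly q x ^ Suc (Suc k)))
          (cscale (poly q x) (F' x) - cscale (of_nat (Suc k) * poly (pderiv q) x) (F x))"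
      proof -
        have "deriv (\<lambda>y. Dseq D k y $ i $ j) x = inverse (poly q x ^ Suc (Suc k)) *
            (poly q x * poly (pderiv (P i j)) x - of_nat (Suc k) * poly (pderiv q) x * poly (P i j) x)" for i j
        proof -
          have "eventually (\<lambda>y. y \<in> {x. poly q x \<noteq> 0}) (nhds x)"
            using x by (intro eventually_nhds_in_open[OF oS]) simp
          then have ev: "eventually (\<lambda>y. Dseq D k y $ i $ j = poly (P i j) y / poly Q y) (nhds x)"
            by (elim eventually_mono) (auto simp: DF cscale_def P Q_def divide_inverse mult.commute)
          have "((\<lambda>y. poly (P i j) y / poly Q y) has_field_derivative
              (poly (pderiv (P i j)) x * poly Q x - poly (P i j) x * poly (pderiv Q) x) / (poly Q x * poly Q x)) (at x)"
            by (rule DERIV_divide[OF poly_DERIV poly_DERIV Qx])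
          then have "deriv (\<lambda>y. Dseq D k y $ i $ j) x =
              (poly (pderiv (P i j)) x * poly Q x - poly (P i j) x * poly (pderiv Q) x) / (poly Q x * poly Q x)"
            using deriv_cong_ev[OF ev refl] DERIV_imp_deriv by metis
          also have "\<dots> = inverse (poly q x ^ Suc (Suc k)) *
            (poly q x * poly (pderiv (P i j)) x - of_nat (Suc k) * poly (pderiv q) x * poly (P i j) x)"
            unfolding Q_def pderiv_power_Suc using x
            by (simp add: field_simps)
          finally show ?thesis .
        qed
        then show ?thesis
          by (simp add: mderiv_def cscale_def vec_eq_iff F'_def P)
      qed
      show ?thesis
        unfolding Dseq.simps md DF[OF x] D0[OF x] comm_cscale F1_def cscale_add
        by (simp add: power_Suc mult.commute)
    qed
    then show ?case using P1 F1g by blast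
  qed
qed

definition fs :: "complex \<Rightarrow> (complex \<Rightarrow> complex^'r^'r) \<Rightarrow> (complex \<Rightarrow> complex^'r^'r)" where
  "fs c f = (\<lambda>x. cscale c (f x))"

interpretation fsp: vector_space "fs :: complex \<Rightarrow> (complex \<Rightarrow> complex^'r^'r) \<Rightarrow> _"
  by unfold_locales (simp_all add: fs_def cscale_def vec_eq_iff fun_eq_iff algebra_simps)

lemma sum_apply_fun: "(\<Sum>b\<in>B. f b) x = (\<Sum>b\<in>B. f b x)"
  by (induction B rule: infinite_finite_induct) auto

definition unitm :: "'r \<times> 'r \<Rightarrow> complex^'r^'r" where
  "unitm p = (\<chi> a b. if (a, b) = p then 1 else 0)"

lemma mat_span_units: "(A::complex^'r^'r) \<in> mat_cvs.span (range unitm)"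
proof -
  have "A = (\<Sum>p\<in>UNIV. cscale (A $ fst p $ snd p) (unitm p))"
  proof -
    have "(\<Sum>p\<in>UNIV. A $ fst p $ snd p * (if (i, j) = p then 1 else 0)) = A $ i $ j" for i j
      by (simp add: if_distrib cong: if_cong)
    then show ?thesis by (simp add: vec_eq_iff sum_component cscale_def unitm_def)
  qed
  also have "\<dots> \<in> mat_cvs.span (range unitm)"
    by (intro mat_cvs.span_sum mat_cvs.span_scale mat_cvs.span_base) auto
  finally show ?thesis .
qed

lemma indep_finite: "mat_cvs.independent (B :: (complex^'r^'r) set) \<Longrightarrow> finite B"
  using mat_cvs.independent_span_bound[of "range unitm" B] mat_span_units by auto

lemma mono_in_span:
  fixes B :: "(complex^'r^'r) set"
  assumes fB: "finite B" and A: "A \<in> mat_cvs.span B" and m: "m \<le> M"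
  shows "(\<lambda>x. cscale (x^m) A) \<in> fsp.span ((\<lambda>(m,b). \<lambda>x. cscale (x^m) b) ` ({..M} \<times> B))"
proof -
  obtain u where u: "A = (\<Sum>b\<in>B. cscale (u b) b)"
    using A mat_cvs.span_finite[OF fB] by auto
  have "(\<lambda>x. cscale (x^m) A) = (\<Sum>b\<in>B. fs (u b) (\<lambda>x. cscale (x^m) b))"
    unfolding u by (simp add: fun_eq_iff sum_apply_fun fs_def mat_cvs.scale_sum_right mult.commute)
  also have "\<dots> \<in> fsp.span ((\<lambda>(m,b). \<lambda>x. cscale (x^m) b) ` ({..M} \<times> B))"
    using m by (intro fsp.span_sum fsp.span_scale fsp.span_base) (auto intro!: image_eqI[where x="(m, _)"])
  finally show ?thesis .
qed

lemma exists_beta: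
  fixes F :: "nat \<Rightarrow> complex \<Rightarrow> complex^'r^'r"
  assumes g: "lie_subalgebra g" and gpF: "\<And>k. gp g (F k)"
  shows "\<exists>\<beta>. (\<exists>k\<le>cdim g. \<beta> k \<noteq> 0) \<and> (\<forall>x. (\<Sum>k\<le>cdim g. cscale (poly (\<beta> k) x) (F k x)) = 0)"
proof -
  define n where "n = cdim g"
  have "\<forall>k. \<exists>d C. (\<forall>e. C e \<in> g) \<and> (\<forall>x. F k x = (\<Sum>e\<le>d. cscale (x^e) (C e)))"
    using gpF unfolding gp_def by blast
  from choice[OF this] obtain dd where "\<forall>k. \<exists>C. (\<forall>e. C e \<in> g) \<and> (\<forall>x. F k x = (\<Sum>e\<le>dd k. cscale (x^e) (C e)))"
    by blast
  from choice[OF this] obtain CC where CCg: "\<And>k e. CC k e \<in> g"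
    and Fk: "\<And>k x. F k x = (\<Sum>e\<le>dd k. cscale (x^e) (CC k e))"
    by blast
  obtain B where BG: "B \<subseteq> g" and Bi: "mat_cvs.independent B" and gB: "g \<subseteq> mat_cvs.span B"
    and cB: "card B = mat_cvs.dim g"
    by (rule mat_cvs.basis_exists)
  have fB: "finite B" by (rule indep_finite[OF Bi])
  have cBn: "card B = n" unfolding n_def cdim_def cB ..
  define dmax where "dmax = Max (dd ` {..n})"
  define N where "N = n * dmax"
  define M where "M = N + dmax"
  define K where "K = {..n} \<times> {..N}"
  define G where "G p = (\<lambda>x. cscale (x ^ snd p) (F (fst p) x))" for p
  define W where "W = (\<lambda>(m,b). \<lambda>x::complex. cscale (x^m) (b::complex^'r^'r)) ` ({..M} \<times> B)"
  have fK: "finite K" unfolding K_def by simp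
  have fW: "finite W" unfolding W_def using fB by simp
  have cK: "card K = (n+1) * (N+1)" unfolding K_def by (simp add: card_cartesian_product)
  have cW: "card W \<le> (M+1) * n"
    unfolding W_def using card_image_le[of "{..M} \<times> B"] fB cBn by (simp add: card_cartesian_product)
  have lt: "(M+1) * n < (n+1) * (N+1)" unfolding M_def N_def by (simp add: algebra_simps)
  have ddle: "dd k \<le> dmax" if "k \<le> n" for k unfolding dmax_def using that by (intro Max_ge) auto
  have GW: "G p \<in> fsp.span W" if p: "p \<in> K" for p
  proof -
    obtain k i where pe: "p = (k, i)" by (cases p)
    have ki: "k \<le> n" "i \<le> N" using p pe K_def by auto
    have "G p = (\<Sum>e\<le>dd k. (\<lambda>x. cscale (x^(i+e)) (CC k e)))"
      unfolding G_def pe by (simp add: fun_eq_iff sum_apply_fun Fk mat_cvs.scale_sum_right power_add)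
    also have "\<dots> \<in> fsp.span W"
    proof (intro fsp.span_sum)
      fix e assume "e \<in> {..dd k}"
      then have "i + e \<le> M" using ddle[OF ki(1)] ki(2) unfolding M_def by auto
      then show "(\<lambda>x. cscale (x^(i+e)) (CC k e)) \<in> fsp.span W"
        unfolding W_def using mono_in_span[OF fB] CCg gB by blast
    qed
    finally show ?thesis .
  qed
  show ?thesis
  proof (cases "inj_on G K")
    case True
    have cGK: "card (G ` K) = card K" using card_image[OF True] .
    have "fsp.dependent (G ` K)"
    proof (rule ccontr)
      assume "fsp.independent (G ` K)"
      moreover have "G ` K \<subseteq> fsp.span W" using GW by blast
      ultimately have "card (G ` K) \<le> card W" using fsp.independent_span_bound[OF fW] by blast
      then show False using cGK cK cW lt by linarith
    qed
    then obtain u where u1: "\<exists>v\<in>G ` K. u v \<noteq> 0" and u2: "(\<Sum>v\<in>G ` K. fs (u v) v) = 0"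
      using fsp.dependent_finite[of "G ` K"] fK by auto
    have u3: "(\<Sum>p\<in>K. fs (u (G p)) (G p)) = 0"
      using u2 sum.reindex[OF True, of "\<lambda>v. fs (u v) v"] by simp
    define \<beta> where "\<beta> k = (\<Sum>i\<le>N. monom (u (G (k, i))) i)" for k
    obtain k0 i0 where k0: "(k0, i0) \<in> K" "u (G (k0, i0)) \<noteq> 0" using u1 by auto
    have "coeff (\<beta> k0) i0 = u (G (k0, i0))"
      using k0(1) unfolding \<beta>_def K_def by (simp add: coeff_sum)
    then have "\<beta> k0 \<noteq> 0" using k0 by auto
    moreover have "k0 \<le> n" using k0 K_def by auto
    moreover have "(\<Sum>k\<le>n. cscale (poly (\<beta> k) x) (F k x)) = 0" for x
    proof -
      have "(\<Sum>k\<le>n. cscale (poly (\<beta> k) x) (F k x)) = (\<Sum>k\<le>n. \<Sum>i\<le>N. fs (u (G (k,i))) (G (k,i)) x)"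
        unfolding \<beta>_def G_def fs_def
        by (simp add: poly_sum poly_monom mat_cvs.scale_sum_left)
      also have "\<dots> = (\<Sum>p\<in>K. fs (u (G p)) (G p) x)"
        unfolding K_def by (simp add: sum.cartesian_product)
      also have "\<dots> = (\<Sum>p\<in>K. fs (u (G p)) (G p)) x" by (simp add: sum_apply_fun)
      finally show ?thesis using u3 by simp
    qed
    ultimately show ?thesis unfolding n_def by blast
  next
    case False
    then obtain p p' where pp: "p \<in> K" "p' \<in> K" "p \<noteq> p'" "G p = G p'"
      unfolding inj_on_def by blast
    obtain k i k' i' where pe: "p = (k, i)" "p' = (k', i')" by (cases p, cases p')
    define \<beta> where "\<beta> j = (if j = k then monom (1::complex) i else 0) - (if j = k' then monom 1 i' else 0)" for j
    have "coeff (\<beta> k) i = 1" using pp(3) pe unfolding \<beta>_def by auto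
    then have "\<beta> k \<noteq> 0" by auto
    moreover have "k \<le> n" using pp pe K_def by auto
    moreover have "(\<Sum>j\<le>n. cscale (poly (\<beta> j) x) (F j x)) = 0" for x
    proof -
      have kk: "k \<le> n" "k' \<le> n" using pp pe K_def by auto
      have pb: "poly (\<beta> j) x = (if j = k then x^i else 0) - (if j = k' then x^i' else 0)" for j
        by (simp add: \<beta>_def poly_monom)
      have "(\<Sum>j\<le>n. cscale (poly (\<beta> j) x) (F j x)) =
          (\<Sum>j\<le>n. (if j = k then cscale (x^i) (F j x) else 0) - (if j = k' then cscale (x^i') (F j x) else 0))"
        by (intro sum.cong refl) (simp add: pb mat_cvs.scale_left_diff_distrib)
      also have "\<dots> = (\<Sum>j\<le>n. (if j = k then cscale (x^i) (F j x) else 0)) - (\<Sum>j\<le>n. (if j = k' then cscale (x^i') (F j x) else 0))"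
        by (simp only: sum_subtractf)
      also have "\<dots> = G p x - G p' x" using kk unfolding G_def pe by simp
      finally show ?thesis using pp(4) by simp
    qed
    ultimately show ?thesis unfolding n_def by blast
  qed
qed

theorem mainTheorem1:
  fixes D Psi :: "complex \<Rightarrow> complex^'r^'r"
    and g :: "(complex^'r^'r) set"
    and q :: "complex poly"
    and U :: "complex set"
  assumes g: "lie_subalgebra g"
    and rat: "rational_matrix_with_denom D q"
    and Dg: "\<And>x. poly q x \<noteq> 0 \<Longrightarrow> D x \<in> g"
    and U: "open U" "simply_connected U" "U \<noteq> {}"
    and U_nopole: "\<And>x. x \<in> U \<Longrightarrow> poly q x \<noteq> 0"
    and Psi_inv: "\<And>x. x \<in> U \<Longrightarrow> invertible (Psi x)"
    and Psi_ode: "\<And>x i j. x \<in> U \<Longrightarrow>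
        ((\<lambda>y. Psi y $ i $ j) has_field_derivative (D x ** Psi x) $ i $ j) (at x)"
  shows "(\<exists>\<alpha> :: nat \<Rightarrow> complex poly. (\<exists>k\<le>cdim g. \<alpha> k \<noteq> 0) \<and>
            (\<forall>x. poly q x \<noteq> 0 \<longrightarrow>
               (\<Sum>k\<le>cdim g. cscale (poly (\<alpha> k) x) (Dseq D k x)) = 0))
       \<and> (\<forall>\<alpha> :: nat \<Rightarrow> complex poly. (\<exists>k\<le>cdim g. \<alpha> k \<noteq> 0) \<and>
            (\<forall>x. poly q x \<noteq> 0 \<longrightarrow>
               (\<Sum>k\<le>cdim g. cscale (poly (\<alpha> k) x) (Dseq D k x)) = 0) \<longrightarrow>
            (\<forall>E\<in>g. \<forall>x\<in>U.
               (\<Sum>k\<le>cdim g. poly (\<alpha> k) x * (deriv ^^ k) (\<lambda>y. W1 D Psi y E) x) = 0))"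
proof -
  have q0: "q \<noteq> 0" using rat unfolding rational_matrix_with_denom_def by blast
  have "\<forall>k. \<exists>F. (\<exists>P. \<forall>x i j. F x $ i $ j = poly (P i j) x) \<and> (\<forall>x. F x \<in> g) \<and>
     (\<forall>x. poly q x \<noteq> 0 \<longrightarrow> Dseq D k x = cscale (inverse (poly q x ^ Suc k)) (F x))"
    using Dseq_rep[OF g rat Dg] by blast
  from choice[OF this] obtain FF where FF: "\<And>k. (\<exists>P. \<forall>x i j. FF k x $ i $ j = poly (P i j) x)"
    "\<And>k x. FF k x \<in> g"
    "\<And>k x. poly q x \<noteq> 0 \<Longrightarrow> Dseq D k x = cscale (inverse (poly q x ^ Suc k)) (FF k x)"
    by blast
  have gpF: "gp g (FF k)" for k
  proof -
    obtain P where P: "\<And>x i j. FF k x $ i $ j = poly (P i j) x" using FF(1) by blast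
    show ?thesis by (rule gpI[OF g P FF(2)])
  qed
  obtain \<beta> where b1: "\<exists>k\<le>cdim g. \<beta> k \<noteq> 0"
    and b2: "\<And>x. (\<Sum>k\<le>cdim g. cscale (poly (\<beta> k) x) (FF k x)) = 0"
    using exists_beta[of g FF] g gpF by blast
  define \<alpha> where "\<alpha> k = \<beta> k * q ^ Suc k" for k
  have P1: "(\<exists>k\<le>cdim g. \<alpha> k \<noteq> 0) \<and>
            (\<forall>x. poly q x \<noteq> 0 \<longrightarrow>
               (\<Sum>k\<le>cdim g. cscale (poly (\<alpha> k) x) (Dseq D k x)) = 0)"
  proof
    show "\<exists>k\<le>cdim g. \<alpha> k \<noteq> 0" using b1 q0 unfolding \<alpha>_def by auto
    show "\<forall>x. poly q x \<noteq> 0 \<longrightarrow> (\<Sum>k\<le>cdim g. cscale (poly (\<alpha> k) x) (Dseq D k x)) = 0"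
    proof (intro allI impI)
      fix x assume x: "poly q x \<noteq> 0"
      have "(\<Sum>k\<le>cdim g. cscale (poly (\<alpha> k) x) (Dseq D k x)) = (\<Sum>k\<le>cdim g. cscale (poly (\<beta> k) x) (FF k x))"
        by (intro sum.cong refl) (simp add: \<alpha>_def FF(3)[OF x] cscale_cscale x field_simps)
      then show "(\<Sum>k\<le>cdim g. cscale (poly (\<alpha> k) x) (Dseq D k x)) = 0" using b2 by simp
    qed
  qed
  have P2: "\<forall>\<alpha> :: nat \<Rightarrow> complex poly. (\<exists>k\<le>cdim g. \<alpha> k \<noteq> 0) \<and>
            (\<forall>x. poly q x \<noteq> 0 \<longrightarrow>
               (\<Sum>k\<le>cdim g. cscale (poly (\<alpha> k) x) (Dseq D k x)) = 0) \<longrightarrow>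
            (\<forall>E\<in>g. \<forall>x\<in>U.
               (\<Sum>k\<le>cdim g. poly (\<alpha> k) x * (deriv ^^ k) (\<lambda>y. W1 D Psi y E) x) = 0)"
  proof (intro allI impI ballI)
    fix \<alpha> :: "nat \<Rightarrow> complex poly" and E x
    assume a: "(\<exists>k\<le>cdim g. \<alpha> k \<noteq> 0) \<and>
            (\<forall>x. poly q x \<noteq> 0 \<longrightarrow> (\<Sum>k\<le>cdim g. cscale (poly (\<alpha> k) x) (Dseq D k x)) = 0)"
      and x: "x \<in> U"
    have "(\<Sum>k\<le>cdim g. poly (\<alpha> k) x * (deriv ^^ k) (\<lambda>y. W1 D Psi y E) x)
        = (\<Sum>k\<le>cdim g. poly (\<alpha> k) x * trace (Dseq D k x ** Mfun Psi x E))"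
      using W_iter[OF rat U(1) U_nopole Psi_inv Psi_ode x] by simp
    also have "\<dots> = trace ((\<Sum>k\<le>cdim g. cscale (poly (\<alpha> k) x) (Dseq D k x)) ** Mfun Psi x E)"
      by (simp add: trace_sum_mult)
    also have "\<dots> = 0" using a U_nopole[OF x] by (simp add: trace_def)
    finally show "(\<Sum>k\<le>cdim g. poly (\<alpha> k) x * (deriv ^^ k) (\<lambda>y. W1 D Psi y E) x) = 0" .
  qed
  show ?thesis using P1 P2 by blast
qed


end
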